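(* Let $0<\alpha<1$, let $x>0$ be fixed, let $y$ be a sufficiently differentiable function on $[0,x]$, and for a positive integer $n$ put $h=x/n$, $y_j=y(jh)$. Then, as $n\to\infty$, $$\frac{1}{h^\alpha}\sum_{k=0}^{n}\sigma_k^{(\alpha)}y_{n-k}=h^{2-\alpha}\sum_{k=1}^{n-1}k^{1-\alpha}\,y''\big((n-k)h\big)+(nh)^{1-\alpha}\,y'\!\left(\tfrac{h}{2}\right)+O\left(h^2\right).$$
   Context: Define $\sigma_0^{(\alpha)}=1$, $\sigma_n^{(\alpha)}=(n-1)^{1-\alpha}-n^{1-\alpha}$, and $\sigma_k^{(\alpha)}=(k-1)^{1-\alpha}-2k^{1-\alpha}+(k+1)^{1-\alpha}$ for $1\le k\le n-1$. "Sufficiently differentiable" means $y\in C^r[0,x]$ for some sufficiently large $r$. *)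

theory Defs
  imports "HOL-Analysis.Analysis" "HOL-Library.Landau_Symbols"
begin

definition sigma :: "real \<Rightarrow> nat \<Rightarrow> nat \<Rightarrow> real" where
  "sigma \<alpha> n k =
     (if k = 0 then 1
      else if k = n then real (n - 1) powr (1 - \<alpha>) - real n powr (1 - \<alpha>)
      else real (k - 1) powr (1 - \<alpha>) - 2 * real k powr (1 - \<alpha>)
           + real (k + 1) powr (1 - \<alpha>))"

definition C_r_derivs :: "nat \<Rightarrow> real \<Rightarrow> (real \<Rightarrow> real) \<Rightarrow> (nat \<Rightarrow> real \<Rightarrow> real) \<Rightarrow> bool" where
  "C_r_derivs r x y D \<longleftrightarrow>
     D 0 = y \<and>
     (\<forall>k<r. \<forall>t\<in>{0..x}. (D k has_real_derivative D (Suc k) t) (at t within {0..x})) \<and>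
     continuous_on {0..x} (D r)"

end

theory Submission
  imports Defs
begin


lemma sigma_ident:
  fixes Y :: "nat \<Rightarrow> real"
  assumes "1 \<le> n"
  shows "(\<Sum>k=0..n. sigma \<alpha> n k * Y (n-k)) =
     real n powr (1-\<alpha>) * (Y 1 - Y 0) +
     (\<Sum>k=1..n-1. real k powr (1-\<alpha>) * (Y (n-k+1) - 2 * Y (n-k) + Y (n-k-1)))"
  using assms
proof (induction n arbitrary: Y rule: dec_induct)
  case base
  show ?case by (simp add: sigma_def)
next
  case (step n)
  define a where "a k = real k powr (1-\<alpha>)" for k
  define Y' where "Y' j = Y (Suc j)" for j
  have IH: "(\<Sum>k=0..n. sigma \<alpha> n k * Y' (n-k)) =
     a n * (Y' 1 - Y' 0) +
     (\<Sum>k=1..n-1. a k * (Y' (n-k+1) - 2 * Y' (n-k) + Y' (n-k-1)))"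
    using step.IH[of Y'] unfolding a_def by simp
  have s1: "sigma \<alpha> (Suc n) n = a (n-1) - 2 * a n + a (n+1)"
    using step.hyps by (simp add: sigma_def a_def)
  have s2: "sigma \<alpha> (Suc n) (Suc n) = a n - a (n+1)"
    by (simp add: sigma_def a_def)
  have s3: "sigma \<alpha> n n = a (n-1) - a n"
    using step.hyps by (simp add: sigma_def a_def)
  have eqs: "sigma \<alpha> (Suc n) k = sigma \<alpha> n k" if "k < n" for k
    using that by (simp add: sigma_def)
  have "(\<Sum>k=0..Suc n. sigma \<alpha> (Suc n) k * Y (Suc n - k))
      = (\<Sum>k=0..<n. sigma \<alpha> (Suc n) k * Y (Suc n - k)) + sigma \<alpha> (Suc n) n * Y 1
        + sigma \<alpha> (Suc n) (Suc n) * Y 0"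
    by (simp add: sum.atLeast0_atMost_Suc atLeastLessThanSuc_atLeastAtMost[symmetric])
  also have "(\<Sum>k=0..<n. sigma \<alpha> (Suc n) k * Y (Suc n - k)) = (\<Sum>k=0..<n. sigma \<alpha> n k * Y' (n - k))"
    by (rule sum.cong) (auto simp: eqs Y'_def Suc_diff_le)
  also have "(\<Sum>k=0..<n. sigma \<alpha> n k * Y' (n - k)) = (\<Sum>k=0..n. sigma \<alpha> n k * Y' (n-k)) - sigma \<alpha> n n * Y 1"
    by (simp add: sum.atLeast0_atMost_Suc atLeastLessThanSuc_atLeastAtMost[symmetric] Y'_def
       flip: atLeast0_lessThan_Suc)
  finally have L: "(\<Sum>k=0..Suc n. sigma \<alpha> (Suc n) k * Y (Suc n - k)) =
     (\<Sum>k=0..n. sigma \<alpha> n k * Y' (n-k)) + (a (n+1) - a n) * (Y 1 - Y 0)"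
    unfolding s1 s2 s3 by (simp add: algebra_simps)
  have "(\<Sum>k=1..Suc n-1. a k * (Y (Suc n-k+1) - 2 * Y (Suc n-k) + Y (Suc n-k-1)))
     = (\<Sum>k=1..n-1. a k * (Y (Suc n-k+1) - 2 * Y (Suc n-k) + Y (Suc n-k-1))) + a n * (Y 2 - 2 * Y 1 + Y 0)"
    using step.hyps
    by (cases n) (auto simp: numeral_2_eq_2)
  also have "(\<Sum>k=1..n-1. a k * (Y (Suc n-k+1) - 2 * Y (Suc n-k) + Y (Suc n-k-1)))
     = (\<Sum>k=1..n-1. a k * (Y' (n-k+1) - 2 * Y' (n-k) + Y' (n-k-1)))"
  proof (rule sum.cong)
    fix k assume "k \<in> {1..n-1}"
    then have "Suc (n - Suc k) = n - k" "Suc n - k = Suc (n-k)" by auto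
    then show "a k * (Y (Suc n-k+1) - 2 * Y (Suc n-k) + Y (Suc n-k-1))
      = a k * (Y' (n-k+1) - 2 * Y' (n-k) + Y' (n-k-1))" by (simp add: Y'_def)
  qed simp
  finally show ?case
    unfolding a_def[symmetric] L IH by (simp add: Y'_def numeral_2_eq_2 algebra_simps)
qed



lemma taylor_bound:
  fixes D :: "nat \<Rightarrow> real \<Rightarrow> real"
  assumes p: "0 < p"
  and der: "\<forall>k<p. \<forall>t\<in>{0..x}. (D k has_real_derivative D (Suc k) t) (at t within {0..x})"
  and bnd: "\<forall>t\<in>{0..x}. \<bar>D p t\<bar> \<le> M"
  and ab: "0 \<le> a" "a \<le> b" "b \<le> x"
  shows "\<bar>D 0 b - (\<Sum>i<p. (b-a)^i/fact i * D i a)\<bar> \<le> M*(b-a)^p"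
proof -
  have sub: "{a..b} \<subseteq> {0..x}" using ab by auto
  have Df: "(D m has_vector_derivative D (Suc m) t) (at t within {a..b})"
    if "m < p" "a \<le> t" "t \<le> b" for m t
  proof -
    have "(D m has_real_derivative D (Suc m) t) (at t within {0..x})"
      using der that ab by auto
    then have "(D m has_real_derivative D (Suc m) t) (at t within {a..b})"
      using sub by (rule has_field_derivative_subset)
    then show ?thesis by (simp add: has_real_derivative_iff_has_vector_derivative)
  qed
  define i where "i \<equiv> \<lambda>s. ((b - s) ^ (p - 1) / fact (p - 1)) *\<^sub>R D p s"
  have HI: "(i has_integral D 0 b - (\<Sum>j<p. ((b-a) ^ j / fact j) *\<^sub>R D j a)) {a..b}"
    unfolding i_def by (rule Taylor_has_integral[of p D "D 0", OF p refl Df ab(2)])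
  have B: "norm (i s) \<le> (b-a)^(p-1) * M" if "s \<in> cbox a b" for s
  proof -
    have s: "a \<le> s" "s \<le> b" using that by auto
    have M0: "\<bar>D p s\<bar> \<le> M" using bnd s ab by auto
    have f1: "1 \<le> (fact (p-1) :: real)" by simp
    have pw: "(b-s)^(p-1) \<le> (b-a)^(p-1)" using s by (intro power_mono) auto
    have "norm (i s) = (b - s) ^ (p - 1) / fact (p - 1) * \<bar>D p s\<bar>"
      using s by (simp add: i_def abs_mult)
    also have "\<dots> \<le> (b - s) ^ (p - 1) * \<bar>D p s\<bar>"
    proof (intro mult_right_mono)
      have "0 \<le> (b-s)^(p-1)" using s by simp
      then have "(b-s)^(p-1) * 1 \<le> (b-s)^(p-1) * fact (p-1)" using mult_left_mono[OF f1] by blast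
      then show "(b - s) ^ (p - 1) / fact (p - 1) \<le> (b - s) ^ (p - 1)"
        by (simp add: divide_le_eq)
    qed simp
    also have "\<dots> \<le> (b-a)^(p-1) * M"
      using s M0 pw by (intro mult_mono) auto
    finally show ?thesis .
  qed
  have M0: "0 \<le> M" using bnd ab by (meson abs_ge_zero atLeastAtMost_iff order_trans)
  have "norm (D 0 b - (\<Sum>j<p. ((b-a) ^ j / fact j) *\<^sub>R D j a)) \<le> (b-a)^(p-1) * M * Henstock_Kurzweil_Integration.content (cbox a b)"
    by (rule has_integral_bound[OF _ _ B]) (use HI M0 ab in auto)
  also have "\<dots> = M * (b-a)^p" using ab p
    by (simp add: power_eq_if[of _ p] algebra_simps)
  finally show ?thesis by simp
qed



lemma main_bound:
  fixes \<alpha> x :: real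
  assumes "0 < \<alpha>" "\<alpha> < 1" "0 < x" and C: "C_r_derivs 4 x y D"
  shows "(\<lambda>n::nat. (1 / (x / real n) powr \<alpha>) *
                (\<Sum>k=0..n. sigma \<alpha> n k * y (real (n - k) * (x / real n)))
              - ((x / real n) powr (2 - \<alpha>) *
                   (\<Sum>k=1..n-1. real k powr (1 - \<alpha>) * D 2 (real (n - k) * (x / real n)))
                 + (real n * (x / real n)) powr (1 - \<alpha>) * D 1 ((x / real n) / 2)))
    \<in> O(\<lambda>n. (x / real n)^2)"
proof -
  have y: "D 0 = y" and der: "\<forall>k<4. \<forall>t\<in>{0..x}. (D k has_real_derivative D (Suc k) t) (at t within {0..x})"
    and c4: "continuous_on {0..x} (D 4)"
    using C by (auto simp: C_r_derivs_def)
  have c3: "continuous_on {0..x} (D 3)"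
    by (rule DERIV_continuous_on[where D="D 4"]) (use der in \<open>auto simp: numeral_eq_Suc\<close>)
  obtain M3 where M3: "\<forall>t\<in>{0..x}. \<bar>D 3 t\<bar> \<le> M3"
    using compact_imp_bounded[OF compact_continuous_image[OF c3 compact_Icc]]
    by (auto simp: bounded_iff)
  obtain M4 where M4: "\<forall>t\<in>{0..x}. \<bar>D 4 t\<bar> \<le> M4"
    using compact_imp_bounded[OF compact_continuous_image[OF c4 compact_Icc]]
    by (auto simp: bounded_iff)
  define M where "M = max M3 M4"
  have B3: "\<forall>t\<in>{0..x}. \<bar>D 3 t\<bar> \<le> M" using M3 unfolding M_def by force
  have B4: "\<forall>t\<in>{0..x}. \<bar>D 4 t\<bar> \<le> M" using M4 unfolding M_def by force
  have M0: "0 \<le> M" using B3 \<open>0 < x\<close> by (meson abs_ge_zero atLeastAtMost_iff less_eq_real_def order_trans)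
  have E1: "\<bar>y h - y 0 - h * D 1 (h/2)\<bar> \<le> 2*M*h^3" if h: "0 < h" "h \<le> x" for h
  proof -
    have T1: "\<bar>D 0 h - (\<Sum>i<3. (h-0)^i/fact i * D i 0)\<bar> \<le> M*(h-0)^3"
      by (rule taylor_bound[where x=x]) (use der B3 h in auto)
    have T2: "\<bar>(\<lambda>k. D (Suc k)) 0 (h/2) - (\<Sum>i<2. (h/2-0)^i/fact i * (\<lambda>k. D (Suc k)) i 0)\<bar> \<le> M*(h/2-0)^2"
      by (rule taylor_bound[where x=x]) (use der B3 h in \<open>auto simp: numeral_eq_Suc\<close>)
    have T1': "\<bar>y h - (y 0 + h * D 1 0 + h^2/2 * D 2 0)\<bar> \<le> M*h^3"
    proof -
      have "(\<Sum>i<3. (h-0)^i/fact i * D i 0) = y 0 + h * D 1 0 + h^2/2 * D 2 0"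
        by (simp add: y lessThan_Suc numeral_3_eq_3 numeral_2_eq_2 power2_eq_square)
      then show ?thesis using T1 by (simp add: y)
    qed
    have T2': "\<bar>D 1 (h/2) - (D 1 0 + h/2 * D 2 0)\<bar> \<le> M*h^2/4"
    proof -
      have "(\<Sum>i<2. (h/2-0)^i/fact i * (\<lambda>k. D (Suc k)) i 0) = D 1 0 + h/2 * D 2 0"
        by (simp add: lessThan_Suc numeral_2_eq_2)
      then show ?thesis using T2 by (simp add: power2_eq_square)
    qed
    have "y h - y 0 - h * D 1 (h/2) = (y h - (y 0 + h * D 1 0 + h^2/2 * D 2 0)) - h * (D 1 (h/2) - (D 1 0 + h/2 * D 2 0))"
      by (simp add: algebra_simps power2_eq_square)
    also have "\<bar>\<dots>\<bar> \<le> M*h^3 + h * (M*h^2/4)"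
    proof -
      have "\<bar>h*(D 1 (h/2) - (D 1 0 + h/2 * D 2 0))\<bar> \<le> h * (M*h^2/4)"
        using T2' h by (simp add: abs_mult mult_left_mono)
      then show ?thesis using T1' by linarith
    qed
    also have "\<dots> \<le> 2*M*h^3" using M0 h by (simp add: power2_eq_square power3_eq_cube)
    finally show ?thesis .
  qed
  have E2: "\<bar>y (s+2*h) - 2 * y (s+h) + y s - h^2 * D 2 (s+h)\<bar> \<le> 19*M*h^4"
    if h: "0 < h" "0 \<le> s" "s + 2*h \<le> x" for s h
  proof -
    have T1: "\<bar>D 0 (s+2*h) - (\<Sum>i<4. (s+2*h-s)^i/fact i * D i s)\<bar> \<le> M*(s+2*h-s)^4"
      by (rule taylor_bound[where x=x]) (use der B4 h in auto)
    have T2: "\<bar>D 0 (s+h) - (\<Sum>i<4. (s+h-s)^i/fact i * D i s)\<bar> \<le> M*(s+h-s)^4"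
      by (rule taylor_bound[where x=x]) (use der B4 h in auto)
    have T3: "\<bar>(\<lambda>k. D (Suc (Suc k))) 0 (s+h) - (\<Sum>i<2. (s+h-s)^i/fact i * (\<lambda>k. D (Suc (Suc k))) i s)\<bar> \<le> M*(s+h-s)^2"
      by (rule taylor_bound[where x=x]) (use der B4 h in \<open>auto simp: numeral_eq_Suc\<close>)
    define R1 where "R1 = D 0 (s+2*h) - (\<Sum>i<4. (s+2*h-s)^i/fact i * D i s)"
    define R2 where "R2 = D 0 (s+h) - (\<Sum>i<4. (s+h-s)^i/fact i * D i s)"
    define R3 where "R3 = (\<lambda>k. D (Suc (Suc k))) 0 (s+h) - (\<Sum>i<2. (s+h-s)^i/fact i * (\<lambda>k. D (Suc (Suc k))) i s)"
    have "y (s+2*h) - 2 * y (s+h) + y s - h^2 * D 2 (s+h) = R1 - 2 * R2 - h^2 * R3"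
    proof -
      have S1: "(\<Sum>i<4. (s+2*h-s)^i/fact i * D i s) = y s + 2*h*D 1 s + 2*h^2 * D 2 s + 8*h^3/6 * D 3 s"
        by (simp add: y lessThan_Suc eval_nat_numeral fact_numeral power2_eq_square power3_eq_cube)
      have S2: "(\<Sum>i<4. (s+h-s)^i/fact i * D i s) = y s + h*D 1 s + h^2/2 * D 2 s + h^3/6 * D 3 s"
        by (simp add: y lessThan_Suc eval_nat_numeral power2_eq_square power3_eq_cube)
      have S3: "(\<Sum>i<2. (s+h-s)^i/fact i * (\<lambda>k. D (Suc (Suc k))) i s) = D 2 s + h * D 3 s"
        by (simp add: lessThan_Suc eval_nat_numeral)
      show ?thesis unfolding R1_def R2_def R3_def S1 S2 S3
        by (simp add: y eval_nat_numeral algebra_simps)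
    qed
    also have "\<bar>\<dots>\<bar> \<le> \<bar>R1\<bar> + 2 * \<bar>R2\<bar> + h^2 * \<bar>R3\<bar>"
    proof -
      have "\<bar>h^2*R3\<bar> = h^2*\<bar>R3\<bar>" by (simp add: abs_mult)
      then show ?thesis by linarith
    qed
    also have "\<dots> \<le> M*(2*h)^4 + 2 * (M*h^4) + h^2 * (M*h^2)"
      using T1 T2 T3 unfolding R1_def R2_def R3_def
      by (intro add_mono mult_left_mono) auto
    also have "\<dots> = 19*M*h^4" by (simp add: algebra_simps)
    finally show ?thesis .
  qed
  define c where "c = x powr (-\<alpha>) * (2*M*x + 19*M*x^2)"
  have pt: "\<bar>(1 / (x / real n) powr \<alpha>) *
                (\<Sum>k=0..n. sigma \<alpha> n k * y (real (n - k) * (x / real n)))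
              - ((x / real n) powr (2 - \<alpha>) *
                   (\<Sum>k=1..n-1. real k powr (1 - \<alpha>) * D 2 (real (n - k) * (x / real n)))
                 + (real n * (x / real n)) powr (1 - \<alpha>) * D 1 ((x / real n) / 2))\<bar>
        \<le> c * \<bar>(x / real n)^2\<bar>" if n1: "1 \<le> n" for n
  proof -
    define h where "h = x / real n"
    have hx: "x / real n = h" by (simp add: h_def)
    have h0: "0 < h" using n1 \<open>0 < x\<close> by (simp add: h_def)
    have xh: "x = real n * h" using n1 by (simp add: h_def)
    define a where "a k = real k powr (1 - \<alpha>)" for k :: nat
    define Y where "Y j = y (real j * h)" for j :: nat
    define q where "q = h powr (-\<alpha>)"
    have q0: "0 < q" using h0 by (simp add: q_def)
    have e1: "1 / h powr \<alpha> = q" by (simp add: q_def powr_minus divide_inverse)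
    have e2: "h powr (2 - \<alpha>) = q * h^2"
      using h0 by (simp add: q_def powr_diff powr_minus divide_inverse powr_numeral)
    have e3: "(real n * h) powr (1 - \<alpha>) = a n * q * h"
      using h0 by (simp add: a_def q_def powr_mult powr_diff powr_minus divide_inverse)
    have sid: "(\<Sum>k=0..n. sigma \<alpha> n k * y (real (n - k) * h)) =
       a n * (Y 1 - Y 0) + (\<Sum>k=1..n-1. a k * (Y (n-k+1) - 2 * Y (n-k) + Y (n-k-1)))"
      using sigma_ident[OF n1, of \<alpha> Y] by (simp add: Y_def a_def)
    have sd: "(\<Sum>k=1..n-1. a k * (Y (n-k+1) - 2 * Y (n-k) + Y (n-k-1) - h^2 * D 2 (real (n - k) * h)))
        = (\<Sum>k=1..n-1. a k * (Y (n-k+1) - 2 * Y (n-k) + Y (n-k-1))) - h^2 * (\<Sum>k=1..n-1. a k * D 2 (real (n - k) * h))"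
      unfolding sum_distrib_left sum_subtractf[symmetric] by (rule sum.cong) (auto simp: algebra_simps)
    have expr: "(1 / h powr \<alpha>) * (\<Sum>k=0..n. sigma \<alpha> n k * y (real (n - k) * h))
              - (h powr (2 - \<alpha>) * (\<Sum>k=1..n-1. real k powr (1 - \<alpha>) * D 2 (real (n - k) * h))
                 + (real n * h) powr (1 - \<alpha>) * D 1 (h / 2))
       = q * (a n * (Y 1 - Y 0 - h * D 1 (h/2)) +
           (\<Sum>k=1..n-1. a k * (Y (n-k+1) - 2 * Y (n-k) + Y (n-k-1) - h^2 * D 2 (real (n - k) * h))))"
      unfolding e1 e2 e3 sid sd a_def[symmetric] by (simp add: algebra_simps)
    have an0: "0 \<le> a n" by (simp add: a_def)
    have hn: "h \<le> x" using xh n1 h0 by (simp add: mult_le_cancel_right1)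
    have b1: "\<bar>Y 1 - Y 0 - h * D 1 (h/2)\<bar> \<le> 2*M*h^3"
      using E1[OF h0 hn] by (simp add: Y_def)
    have b2: "\<bar>a k * (Y (n-k+1) - 2 * Y (n-k) + Y (n-k-1) - h^2 * D 2 (real (n - k) * h))\<bar> \<le> a n * (19*M*h^4)"
      if k: "k \<in> {1..n-1}" for k
    proof -
      define s where "s = real (n-k-1) * h"
      have s0: "0 \<le> s" using h0 by (simp add: s_def)
      have r1: "real (n-k+1) * h = s + 2*h" "real (n-k) * h = s + h" "real (n-k-1) * h = s"
        using k by (auto simp: s_def of_nat_diff algebra_simps)
      have "real (n-k+1) \<le> real n" using k by auto
      then have "real (n-k+1) * h \<le> x" using xh h0 by (simp add: mult_right_mono)
      then have s2: "s + 2*h \<le> x" using r1 by simp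
      have d: "\<bar>Y (n-k+1) - 2 * Y (n-k) + Y (n-k-1) - h^2 * D 2 (real (n - k) * h)\<bar> \<le> 19*M*h^4"
        using E2[OF h0 s0 s2] unfolding Y_def r1 .
      have ak: "0 \<le> a k" "a k \<le> a n" using k \<open>\<alpha> < 1\<close> by (auto simp: a_def intro!: powr_mono2)
      show ?thesis unfolding abs_mult using d ak
        by (simp add: mult_mono)
    qed
    have bs: "\<bar>\<Sum>k=1..n-1. a k * (Y (n-k+1) - 2 * Y (n-k) + Y (n-k-1) - h^2 * D 2 (real (n - k) * h))\<bar>
         \<le> real n * (a n * (19*M*h^4))"
    proof -
      have "\<bar>\<Sum>k=1..n-1. a k * (Y (n-k+1) - 2 * Y (n-k) + Y (n-k-1) - h^2 * D 2 (real (n - k) * h))\<bar>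
          \<le> (\<Sum>k=1..n-1. \<bar>a k * (Y (n-k+1) - 2 * Y (n-k) + Y (n-k-1) - h^2 * D 2 (real (n - k) * h))\<bar>)"
        by (rule sum_abs)
      also have "\<dots> \<le> real (card {1..n-1}) * (a n * (19*M*h^4))"
        by (rule sum_bounded_above) (use b2 in auto)
      also have "\<dots> \<le> real n * (a n * (19*M*h^4))"
        using an0 M0 h0 by (intro mult_right_mono) auto
      finally show ?thesis .
    qed
    have qa: "q * a n = real n / x powr \<alpha>"
      using h0 n1 unfolding xh
      by (simp add: q_def a_def powr_mult powr_diff powr_minus divide_inverse)
    have "\<bar>q * (a n * (Y 1 - Y 0 - h * D 1 (h/2)) +
           (\<Sum>k=1..n-1. a k * (Y (n-k+1) - 2 * Y (n-k) + Y (n-k-1) - h^2 * D 2 (real (n - k) * h))))\<bar>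
        \<le> q * (a n * (2*M*h^3) + real n * (a n * (19*M*h^4)))"
    proof -
      define A where "A = a n * (Y 1 - Y 0 - h * D 1 (h/2))"
      define S where "S = (\<Sum>k=1..n-1. a k * (Y (n-k+1) - 2 * Y (n-k) + Y (n-k-1) - h^2 * D 2 (real (n - k) * h)))"
      have "\<bar>A\<bar> \<le> a n * (2*M*h^3)"
        using b1 an0 unfolding A_def by (simp add: abs_mult mult_left_mono)
      then have "\<bar>A + S\<bar> \<le> a n * (2*M*h^3) + real n * (a n * (19*M*h^4))"
        using bs unfolding S_def[symmetric] by linarith
      then have "q * \<bar>A + S\<bar> \<le> q * (a n * (2*M*h^3) + real n * (a n * (19*M*h^4)))"
        using q0 by (simp add: mult_left_mono)
      then show ?thesis using q0 unfolding A_def[symmetric] S_def[symmetric] by (simp add: abs_mult)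
    qed
    also have "\<dots> = (q * a n) * (2*M*h^3 + real n * (19*M*h^4))" by (simp add: algebra_simps)
    also have "\<dots> = (real n * (2*M*h^3 + real n * (19*M*h^4))) / x powr \<alpha>" unfolding qa by simp
    also have "real n * (2*M*h^3 + real n * (19*M*h^4)) = (2*M*x + 19*M*x^2) * h^2"
      unfolding xh by (simp add: algebra_simps power2_eq_square power3_eq_cube eval_nat_numeral)
    also have "(2*M*x + 19*M*x^2) * h^2 / x powr \<alpha> = c * \<bar>h^2\<bar>"
      by (simp add: c_def powr_minus divide_inverse)
    finally show ?thesis unfolding hx expr .
  qed
  show ?thesis
    by (rule bigoI[where c=c]) (use pt eventually_ge_at_top[of "1::nat"] in \<open>auto elim!: eventually_mono\<close>)
qed


theorem lemma5:
  fixes \<alpha> x :: real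
  assumes "0 < \<alpha>" "\<alpha> < 1" "0 < x"
  shows "\<exists>r::nat. \<forall>y D. C_r_derivs r x y D \<longrightarrow>
    (\<lambda>n::nat. (1 / (x / real n) powr \<alpha>) *
                (\<Sum>k=0..n. sigma \<alpha> n k * y (real (n - k) * (x / real n)))
              - ((x / real n) powr (2 - \<alpha>) *
                   (\<Sum>k=1..n-1. real k powr (1 - \<alpha>) * D 2 (real (n - k) * (x / real n)))
                 + (real n * (x / real n)) powr (1 - \<alpha>) * D 1 ((x / real n) / 2)))
    \<in> O(\<lambda>n. (x / real n)^2)"
  using main_bound[OF assms] by blast

end
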